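(* If $\mathfrak{p}=\mathfrak{c}$, then every almost disjoint family of size less than $\mathfrak{c}$ can be extended to a strongly tight MAD family.
   Context: An almost disjoint (AD) family is a family of infinite subsets of $\omega$ with pairwise finite intersections; MAD means maximal AD. $\mathcal{I}(\mathcal{A})$ is the ideal generated by $\mathcal{A}$ and the finite sets. An ideal $\mathcal{I}$ is strongly tight if for every $\{X_n:n\in\omega\}\subseteq[\omega]^\omega$ such that $\{n:X_n\subseteq^*Y\}$ is finite for every $Y\in\mathcal{I}$, there is $A\in\mathcal{I}$ with $A\cap X_n\ne\emptyset$ for all $n$; $\mathcal{A}$ is strongly tight if $\mathcal{I}(\mathcal{A})$ is. $\mathfrak{p}$ is the pseudointersection number. *)

theory Defs
  imports Main
begin

definition almost_subset :: "nat set \<Rightarrow> nat set \<Rightarrow> bool" where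
  "almost_subset X Y \<longleftrightarrow> finite (X - Y)"

definition almost_disjoint_family :: "nat set set \<Rightarrow> bool" where
  "almost_disjoint_family \<A> \<longleftrightarrow>
     (\<forall>X\<in>\<A>. infinite X) \<and> (\<forall>X\<in>\<A>. \<forall>Y\<in>\<A>. X \<noteq> Y \<longrightarrow> finite (X \<inter> Y))"

definition MAD_family :: "nat set set \<Rightarrow> bool" where
  "MAD_family \<A> \<longleftrightarrow> almost_disjoint_family \<A> \<and>
     (\<forall>\<B>. almost_disjoint_family \<B> \<and> \<A> \<subseteq> \<B> \<longrightarrow> \<B> = \<A>)"

definition ideal_gen :: "nat set set \<Rightarrow> nat set set" where
  "ideal_gen \<A> = {Y. \<exists>F. F \<subseteq> \<A> \<and> finite F \<and> finite (Y - \<Union>F)}"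

definition strongly_tight_ideal :: "nat set set \<Rightarrow> bool" where
  "strongly_tight_ideal \<I> \<longleftrightarrow>
     (\<forall>X :: nat \<Rightarrow> nat set.
        (\<forall>n. infinite (X n)) \<and> (\<forall>Y\<in>\<I>. finite {n. almost_subset (X n) Y})
        \<longrightarrow> (\<exists>A\<in>\<I>. \<forall>n. A \<inter> X n \<noteq> {}))"

definition strongly_tight :: "nat set set \<Rightarrow> bool" where
  "strongly_tight \<A> \<longleftrightarrow> strongly_tight_ideal (ideal_gen \<A>)"

definition SFIP :: "nat set set \<Rightarrow> bool" where
  "SFIP \<F> \<longleftrightarrow> (\<forall>G. G \<subseteq> \<F> \<and> finite G \<and> G \<noteq> {} \<longrightarrow> infinite (\<Inter>G))"

definition pseudointersection :: "nat set \<Rightarrow> nat set set \<Rightarrow> bool" where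
  "pseudointersection P \<F> \<longleftrightarrow> infinite P \<and> (\<forall>X\<in>\<F>. almost_subset P X)"

text \<open>Families witnessing the definition of the pseudointersection number p:
  families of infinite subsets of omega with the SFIP and no infinite pseudointersection.\<close>
definition p_witness :: "nat set set \<Rightarrow> bool" where
  "p_witness \<F> \<longleftrightarrow> (\<forall>X\<in>\<F>. infinite X) \<and> SFIP \<F> \<and> \<not> (\<exists>P. pseudointersection P \<F>)"

text \<open>\<open>p = c\<close>: the minimum of the cardinalities of witness families equals
  c = |P(omega)|, i.e. every witness family has size at least c and some witness
  family has size at most c.\<close>
definition p_eq_c :: bool where
  "p_eq_c \<longleftrightarrow>
     (\<forall>\<F>. p_witness \<F> \<longrightarrow> (card_of (UNIV :: nat set set), card_of \<F>) \<in> ordLeq) \<and>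
     (\<exists>\<F>. p_witness \<F> \<and> (card_of \<F>, card_of (UNIV :: nat set set)) \<in> ordLeq)"

end

theory Submission
  imports Defs "HOL-Library.Nat_Bijection" "HOL-Library.Infinite_Set"
begin

unbundle cardinal_syntax

abbreviation cc :: "nat set rel" where "cc \<equiv> |UNIV :: nat set set|"

lemma c_infinite: "infinite (UNIV :: nat set set)"
  by (metis finite_Pow_iff Pow_UNIV infinite_UNIV_nat)

lemma un_less: "|A| <o cc \<Longrightarrow> |B| <o cc \<Longrightarrow> |A \<union> B| <o cc"
  by (rule card_of_Un_ordLess_infinite[OF c_infinite])

lemma finite_less: "finite A \<Longrightarrow> |A| <o cc"
  by (metis Field_card_of c_infinite card_of_Well_order finite_ordLess_infinite)

lemma nat_less: "|UNIV :: nat set| <o cc"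
  by (metis Pow_UNIV card_of_Pow)

lemma p_pseudo:
  assumes pc: p_eq_c and inf: "\<forall>X\<in>F. infinite X" and sf: "SFIP F" and cd: "|F| <o cc"
  shows "\<exists>P. pseudointersection P F"
proof (rule ccontr)
  assume "\<nexists>P. pseudointersection P F"
  then have "p_witness F" using inf sf unfolding p_witness_def by blast
  then have "cc \<le>o |F|" using pc unfolding p_eq_c_def by blast
  then show False using cd not_ordLess_ordLeq by blast
qed


lemma dominate:
  fixes G :: "(nat \<Rightarrow> nat) set"
  assumes pc: p_eq_c and cG: "|G| <o cc"
  shows "\<exists>h. \<forall>f\<in>G. finite {j. h j < f j}"
proof -
  define S where "S f i = (\<Sum>t\<le>i. f t)" for f :: "nat \<Rightarrow> nat" and i
  define W where "W f = {prod_encode (i,k) | i k. S f i \<le> k}" for f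
  define V where "V m = {prod_encode (i,k) | i k. m \<le> i}" for m
  define Fam where "Fam = W ` G \<union> range V"
  define good where "good Q \<longleftrightarrow> (\<exists>m0. \<forall>m\<ge>m0. \<exists>K0. \<forall>K\<ge>K0. prod_encode (m,K) \<in> Q)" for Q
  have goodW: "good (W f)" for f unfolding good_def W_def by blast
  have goodV: "good (V m)" for m unfolding good_def V_def by blast
  have good_int: "good (Q1 \<inter> Q2)" if g1: "good Q1" and g2: "good Q2" for Q1 Q2
  proof -
    obtain m1 where m1: "\<forall>m\<ge>m1. \<exists>K0. \<forall>K\<ge>K0. prod_encode (m,K) \<in> Q1" using g1 unfolding good_def by blast
    obtain m2 where m2: "\<forall>m\<ge>m2. \<exists>K0. \<forall>K\<ge>K0. prod_encode (m,K) \<in> Q2" using g2 unfolding good_def by blast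
    have "\<forall>m\<ge>max m1 m2. \<exists>K0. \<forall>K\<ge>K0. prod_encode (m,K) \<in> Q1 \<inter> Q2"
    proof (intro allI impI)
      fix m assume "max m1 m2 \<le> m"
      then have "m1 \<le> m" "m2 \<le> m" by auto
      then obtain K1 K2 where K1: "\<forall>K\<ge>K1. prod_encode (m,K) \<in> Q1" and K2: "\<forall>K\<ge>K2. prod_encode (m,K) \<in> Q2"
        using m1 m2 by blast
      have "\<forall>K\<ge>max K1 K2. prod_encode (m,K) \<in> Q1 \<inter> Q2" using K1 K2 by simp
      then show "\<exists>K0. \<forall>K\<ge>K0. prod_encode (m,K) \<in> Q1 \<inter> Q2" by blast
    qed
    then show ?thesis unfolding good_def by blast
  qed
  have good_UNIV: "good UNIV" unfolding good_def by blast
  have good_inf: "infinite Q" if gQ: "good Q" for Q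
  proof -
    obtain m0 where m0: "\<forall>m\<ge>m0. \<exists>K0. \<forall>K\<ge>K0. prod_encode (m,K) \<in> Q" using gQ unfolding good_def by blast
    then have "\<exists>K0. \<forall>K\<ge>K0. prod_encode (m0,K) \<in> Q" by simp
    then obtain K0 where K0: "\<forall>K\<ge>K0. prod_encode (m0,K) \<in> Q" by blast
    have "\<exists>n\<ge>N. n \<in> Q" for N
    proof -
      have 1: "prod_encode (m0, max K0 N) \<in> Q" using K0[rule_format, of "max K0 N"] by simp
      have "max K0 N \<le> prod_encode (m0, max K0 N)" by (rule le_prod_encode_2)
      then have "N \<le> prod_encode (m0, max K0 N)" by linarith
      then show ?thesis using 1 by blast
    qed
    then show ?thesis unfolding infinite_nat_iff_unbounded_le by blast
  qed
  have fin: "finite H \<Longrightarrow> H \<subseteq> Fam \<Longrightarrow> good (\<Inter>H)" for H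
  proof (induction H rule: finite_induct)
    case empty then show ?case using good_UNIV by simp
  next
    case (insert Q H)
    have "good Q" using insert.prems goodW goodV unfolding Fam_def by auto
    then show ?case using insert good_int by simp
  qed
  have sfip: "SFIP Fam" unfolding SFIP_def using fin good_inf by blast
  have infs: "\<forall>X\<in>Fam. infinite X"
  proof
    fix X assume "X \<in> Fam"
    then have "good (\<Inter>{X})" using fin[of "{X}"] by blast
    then show "infinite X" using good_inf by simp
  qed
  have cF: "|Fam| <o cc"
  proof -
    have "|W ` G| <o cc" using card_of_image[of W G] cG ordLeq_ordLess_trans by blast
    moreover have "|range V| <o cc" using card_of_image[of V UNIV] nat_less ordLeq_ordLess_trans by blast
    ultimately show ?thesis unfolding Fam_def by (rule un_less)
  qed
  obtain P where P: "infinite P" "\<forall>Q\<in>Fam. finite (P - Q)"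
    using p_pseudo[OF pc infs sfip cF] unfolding pseudointersection_def almost_subset_def by blast
  have col: "\<exists>p. j \<le> fst p \<and> prod_encode p \<in> P" for j
  proof -
    have "finite (P - V j)" using P(2) unfolding Fam_def by auto
    then have "P \<inter> V j \<noteq> {}" using P(1) by (metis Diff_triv)
    then obtain i k where "prod_encode (i,k) \<in> P" "j \<le> i" unfolding V_def by blast
    then show ?thesis by (intro exI[of _ "(i,k)"]) auto
  qed
  define pick where "pick j = (SOME p. j \<le> fst p \<and> prod_encode p \<in> P)" for j
  have pick: "j \<le> fst (pick j) \<and> prod_encode (pick j) \<in> P" for j
    unfolding pick_def using someI_ex[OF col] by blast
  define h where "h j = snd (pick j)" for j
  have "finite {j. h j < f j}" if fG: "f \<in> G" for f
  proof -
    have "finite (P - W f)" using P(2) fG unfolding Fam_def by auto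
    then have "finite (fst ` prod_decode ` (P - W f))" by simp
    then obtain M where M: "fst ` prod_decode ` (P - W f) \<subseteq> {..<M}" using finite_nat_bounded by blast
    have "{j. h j < f j} \<subseteq> {..<M}"
    proof (rule ccontr)
      assume "\<not> ?thesis"
      then obtain j where "j \<in> {j. h j < f j}" "j \<notin> {..<M}" by blast
      then have j: "h j < f j" "M \<le> j" by auto
      obtain i k where ik: "pick j = (i,k)" by fastforce
      have "j \<le> i" "prod_encode (i,k) \<in> P" using pick[of j] ik by auto
      have "prod_encode (i,k) \<in> W f"
      proof (rule ccontr)
        assume "prod_encode (i,k) \<notin> W f"
        then have "prod_encode (i,k) \<in> P - W f" using \<open>prod_encode (i,k) \<in> P\<close> by auto
        then have "fst (prod_decode (prod_encode (i,k))) \<in> {..<M}" using M by blast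
        then show False using \<open>j \<le> i\<close> j(2) by simp
      qed
      then have "S f i \<le> k" unfolding W_def by auto
      moreover have "f j \<le> S f i" unfolding S_def using \<open>j \<le> i\<close> by (intro member_le_sum) auto
      moreover have "h j = k" unfolding h_def ik by simp
      ultimately show False using j(1) by simp
    qed
    then show ?thesis using finite_subset by blast
  qed
  then show ?thesis by blast
qed


lemma ideal_genI: "F \<subseteq> C \<Longrightarrow> finite F \<Longrightarrow> finite (Y - \<Union>F) \<Longrightarrow> Y \<in> ideal_gen C"
  unfolding ideal_gen_def by blast

lemma extend_one:
  fixes X :: "nat \<Rightarrow> nat set" and C :: "nat set set"
  assumes pc: p_eq_c and ad: "almost_disjoint_family C" and cC: "|C| <o cc"
    and Xinf: "\<forall>n. infinite (X n)"
    and hyp: "\<forall>Y\<in>ideal_gen C. finite {n. almost_subset (X n) Y}"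
  shows "\<exists>A. infinite A \<and> (\<forall>Z\<in>C. finite (A \<inter> Z)) \<and> (\<forall>n. A \<inter> X n \<noteq> {})"
proof -
  have Cinf: "\<forall>c\<in>C. infinite c" and Cad: "\<And>c d. c \<in> C \<Longrightarrow> d \<in> C \<Longrightarrow> c \<noteq> d \<Longrightarrow> finite (c \<inter> d)"
    using ad unfolding almost_disjoint_family_def by blast+
  define E where "E = {j. \<exists>F. F \<subseteq> C \<and> finite F \<and> finite (X j - \<Union>F)}"
  define S where "S j = {c\<in>C. infinite (X j \<inter> c)}" for j
  have SE: "finite (S j) \<and> S j \<noteq> {} \<and> finite (X j - \<Union>(S j))" if "j \<in> E" for j
  proof -
    have "\<exists>F. F \<subseteq> C \<and> finite F \<and> finite (X j - \<Union>F)" using that unfolding E_def by simp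
    then obtain F where F: "F \<subseteq> C" "finite F" "finite (X j - \<Union>F)" by auto
    have "S j \<subseteq> F"
    proof
      fix c assume c: "c \<in> S j"
      show "c \<in> F"
      proof (rule ccontr)
        assume nF: "c \<notin> F"
        have "X j \<inter> c \<subseteq> (X j - \<Union>F) \<union> (\<Union>d\<in>F. c \<inter> d)" by blast
        moreover have "finite (\<Union>d\<in>F. c \<inter> d)"
          using F nF c Cad unfolding S_def by (intro finite_UN_I) auto
        ultimately have "finite (X j \<inter> c)" using F(3) by (meson finite_UnI finite_subset)
        then show False using c unfolding S_def by blast
      qed
    qed
    then have fS: "finite (S j)" using F(2) finite_subset by blast
    have sub: "X j \<subseteq> (X j - \<Union>F) \<union> (\<Union>d\<in>F. X j \<inter> d)" by blast
    have ne: "S j \<noteq> {}"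
    proof
      assume "S j = {}"
      then have "\<forall>d\<in>F. finite (X j \<inter> d)" using F(1) unfolding S_def by blast
      then have "finite (\<Union>d\<in>F. X j \<inter> d)" using F(2) by blast
      then show False using sub F(3) Xinf by (meson finite_UnI finite_subset)
    qed
    have "X j - \<Union>(S j) \<subseteq> (X j - \<Union>F) \<union> (\<Union>d\<in>F - S j. X j \<inter> d)" by blast
    moreover have "finite (\<Union>d\<in>F - S j. X j \<inter> d)" using F(1,2) unfolding S_def by (intro finite_UN_I) auto
    ultimately have "finite (X j - \<Union>(S j))" using F(3) by (meson finite_UnI finite_subset)
    then show ?thesis using fS ne by blast
  qed
  have SC: "S j \<subseteq> C" for j unfolding S_def by blast
  have Tfin: "finite {j. j \<in> E \<and> S j \<subseteq> T}" if "finite T" "T \<subseteq> C" for T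
  proof -
    have "\<Union>T \<in> ideal_gen C" using that by (intro ideal_genI[of T]) auto
    then have fin: "finite {n. almost_subset (X n) (\<Union>T)}" using hyp by blast
    have "{j. j \<in> E \<and> S j \<subseteq> T} \<subseteq> {n. almost_subset (X n) (\<Union>T)}"
    proof
      fix j assume "j \<in> {j. j \<in> E \<and> S j \<subseteq> T}"
      then have "j \<in> E" "S j \<subseteq> T" by auto
      then have "X j - \<Union>T \<subseteq> X j - \<Union>(S j)" by blast
      then have "finite (X j - \<Union>T)" using SE[OF \<open>j \<in> E\<close>] finite_subset by blast
      then show "j \<in> {n. almost_subset (X n) (\<Union>T)}" unfolding almost_subset_def by simp
    qed
    then show ?thesis using fin finite_subset by blast
  qed
  define fa where "fa c = (LEAST i. i \<in> E \<and> c \<in> S i)" for c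
  have fa: "fa c \<in> E \<and> c \<in> S (fa c) \<and> fa c \<le> j" if "j \<in> E" "c \<in> S j" for c j
    unfolding fa_def using that by (metis (mono_tags, lifting) LeastI Least_le)
  have choice: "\<exists>c. c \<in> S j \<and> (\<forall>c'\<in>S j. fa c' \<le> fa c)" if "j \<in> E" for j
  proof -
    have "finite (fa ` S j)" "fa ` S j \<noteq> {}" using SE[OF that] by auto
    then have "Max (fa ` S j) \<in> fa ` S j" by (rule Max_in)
    then obtain c where c: "c \<in> S j" "fa c = Max (fa ` S j)" by auto
    have "\<forall>c'\<in>S j. fa c' \<le> fa c" using c(2) SE[OF that] by simp
    then show ?thesis using c(1) by blast
  qed
  define cj where "cj j = (if j \<in> E then SOME c. c \<in> S j \<and> (\<forall>c'\<in>S j. fa c' \<le> fa c) else {})" for j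
  have cjE: "cj j \<in> S j \<and> (\<forall>c'\<in>S j. fa c' \<le> fa (cj j))" if "j \<in> E" for j
    unfolding cj_def using that someI_ex[OF choice[OF that]] by simp
  have cj_fin: "finite {j. cj j = c}" if cC: "c \<in> C" for c
  proof (cases "{j. cj j = c} = {}")
    case True then show ?thesis by simp
  next
    case False
    then obtain j0 where j0: "cj j0 = c" by auto
    have "j0 \<in> E"
    proof (rule ccontr)
      assume "j0 \<notin> E" then have "c = {}" using j0 cj_def by simp
      then show False using Cinf cC by auto
    qed
    then have cS: "c \<in> S j0" using cjE j0 by blast
    define m where "m = fa c"
    define T where "T = (\<Union>i\<in>{i. i \<le> m \<and> i \<in> E}. S i)"
    have Tf: "finite T" unfolding T_def using SE by auto
    have TC: "T \<subseteq> C" unfolding T_def using SC by blast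
    have "{j. cj j = c} \<subseteq> {j. j \<in> E \<and> S j \<subseteq> T}"
    proof
      fix j assume "j \<in> {j. cj j = c}"
      then have cjc: "cj j = c" by simp
      have jE: "j \<in> E"
      proof (rule ccontr)
        assume "j \<notin> E" then have "c = {}" using cjc cj_def by simp
        then show False using Cinf cC by auto
      qed
      have "S j \<subseteq> T"
      proof
        fix c' assume c': "c' \<in> S j"
        have "fa c' \<le> m" using cjE[OF jE] c' cjc m_def by auto
        moreover have "fa c' \<in> E" "c' \<in> S (fa c')" using fa[OF jE c'] by auto
        ultimately show "c' \<in> T" unfolding T_def by blast
      qed
      then show "j \<in> {j. j \<in> E \<and> S j \<subseteq> T}" using jE by simp
    qed
    then show ?thesis using Tfin[OF Tf TC] finite_subset by blast
  qed
  have goodZ: "\<exists>P. P \<subseteq> X j \<and> infinite P \<and> (\<forall>c\<in>C. finite (P \<inter> c))" if "j \<notin> E" for j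
  proof -
    have nE: "infinite (X j - \<Union>F)" if "F \<subseteq> C" "finite F" for F
      using \<open>j \<notin> E\<close> that unfolding E_def by blast
    define Fam where "Fam = insert (X j) ((\<lambda>c. X j - c) ` C)"
    have infs: "\<forall>Q\<in>Fam. infinite Q"
    proof
      fix Q assume "Q \<in> Fam"
      then show "infinite Q" unfolding Fam_def using Xinf nE[of "{c}" for c] by auto
    qed
    have sfip: "SFIP Fam" unfolding SFIP_def
    proof (intro allI impI)
      fix G assume G: "G \<subseteq> Fam \<and> finite G \<and> G \<noteq> {}"
      have "G - {X j} \<subseteq> (\<lambda>c. X j - c) ` C" "finite (G - {X j})" using G unfolding Fam_def by auto
      then obtain F where F: "F \<subseteq> C" "finite F" "G - {X j} = (\<lambda>c. X j - c) ` F"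
        by (meson finite_subset_image)
      have "X j - \<Union>F \<subseteq> \<Inter>G"
      proof
        fix x assume x: "x \<in> X j - \<Union>F"
        show "x \<in> \<Inter>G"
        proof
          fix Q assume "Q \<in> G"
          then have "Q = X j \<or> Q \<in> (\<lambda>c. X j - c) ` F" using F(3) by blast
          then show "x \<in> Q" using x by auto
        qed
      qed
      then show "infinite (\<Inter>G)" using nE[OF F(1,2)] finite_subset by blast
    qed
    have cF: "|Fam| <o cc"
    proof -
      have c1: "|(\<lambda>c. X j - c) ` C| <o cc" using card_of_image cC ordLeq_ordLess_trans by blast
      have c2: "|{X j}| <o cc" by (rule finite_less) simp
      have "|{X j} \<union> (\<lambda>c. X j - c) ` C| <o cc" by (rule un_less[OF c2 c1])
      then show ?thesis unfolding Fam_def by simp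
    qed
    obtain P where P: "infinite P" "\<forall>Q\<in>Fam. finite (P - Q)"
      using p_pseudo[OF pc infs sfip cF] unfolding pseudointersection_def almost_subset_def by blast
    have "finite (P - X j)" using P(2) unfolding Fam_def by simp
    then have i1: "infinite (P \<inter> X j)" using P(1) by (metis Diff_Diff_Int Diff_infinite_finite Int_commute)
    have "\<forall>c\<in>C. finite (P \<inter> X j \<inter> c)"
    proof
      fix c assume "c \<in> C"
      then have "finite (P - (X j - c))" using P(2) unfolding Fam_def by simp
      moreover have "P \<inter> X j \<inter> c \<subseteq> P - (X j - c)" by blast
      ultimately show "finite (P \<inter> X j \<inter> c)" using finite_subset by blast
    qed
    then show ?thesis using i1 by (intro exI[of _ "P \<inter> X j"]) blast
  qed
  define Z where "Z j = (if j \<in> E then X j \<inter> cj j else (SOME P. P \<subseteq> X j \<and> infinite P \<and> (\<forall>c\<in>C. finite (P \<inter> c))))" for j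
  have Zp: "Z j \<subseteq> X j \<and> infinite (Z j) \<and> (\<forall>c\<in>C. c \<noteq> cj j \<longrightarrow> finite (Z j \<inter> c))" for j
  proof (cases "j \<in> E")
    case True
    then have cs: "cj j \<in> S j" using cjE by blast
    then have "cj j \<in> C" "infinite (X j \<inter> cj j)" unfolding S_def by auto
    moreover have "finite (Z j \<inter> c)" if "c \<in> C" "c \<noteq> cj j" for c
    proof -
      have "Z j \<inter> c \<subseteq> cj j \<inter> c" unfolding Z_def using True by auto
      then show ?thesis using Cad[OF \<open>cj j \<in> C\<close> that(1)] that(2) finite_subset by metis
    qed
    ultimately show ?thesis unfolding Z_def using True by auto
  next
    case False
    then show ?thesis unfolding Z_def using someI_ex[OF goodZ[OF False]] by simp
  qed
  define fc where "fc c j = (if finite (Z j \<inter> c) then Max (insert 0 (Z j \<inter> c)) + 1 else 0)" for c j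
  have "|fc ` C| <o cc" using card_of_image cC ordLeq_ordLess_trans by blast
  then obtain h where h: "\<forall>f\<in>fc ` C. finite {j. h j < f j}" using dominate[OF pc] by blast
  have ex_a: "\<exists>a. a \<in> Z j \<and> h j + j \<le> a" for j
    using Zp[of j] unfolding infinite_nat_iff_unbounded_le by blast
  define a where "a j = (SOME a. a \<in> Z j \<and> h j + j \<le> a)" for j
  have a: "a j \<in> Z j \<and> h j + j \<le> a j" for j
    unfolding a_def using someI_ex[OF ex_a] by blast
  have "infinite (range a)"
  proof
    assume "finite (range a)"
    then obtain k where "range a \<subseteq> {..<k}" using finite_nat_bounded by blast
    then have "a k < k" by auto
    then show False using a[of k] by simp
  qed
  moreover have "\<forall>n. range a \<inter> X n \<noteq> {}" using a Zp by blast
  moreover have "finite (range a \<inter> c)" if cC: "c \<in> C" for c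
  proof -
    have "{j. a j \<in> c} \<subseteq> {j. cj j = c} \<union> {j. h j < fc c j}"
    proof
      fix j assume "j \<in> {j. a j \<in> c}"
      then have ac: "a j \<in> c" by simp
      show "j \<in> {j. cj j = c} \<union> {j. h j < fc c j}"
      proof (cases "cj j = c")
        case True then show ?thesis by simp
      next
        case False
        then have fin: "finite (Z j \<inter> c)" using Zp cC by blast
        have "a j \<in> Z j \<inter> c" using a ac by blast
        then have "a j \<le> Max (insert 0 (Z j \<inter> c))" using fin by simp
        then have "a j < fc c j" unfolding fc_def using fin by simp
        then show ?thesis using a[of j] by simp
      qed
    qed
    moreover have "finite ({j. cj j = c} \<union> {j. h j < fc c j})"
      using cj_fin[OF cC] h cC by blast
    ultimately have "finite (a ` {j. a j \<in> c})" using finite_subset by blast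
    moreover have "range a \<inter> c = a ` {j. a j \<in> c}" by blast
    ultimately show ?thesis by simp
  qed
  ultimately show ?thesis by blast
qed

lemma ad_mono: "almost_disjoint_family B \<Longrightarrow> C \<subseteq> B \<Longrightarrow> almost_disjoint_family C"
  unfolding almost_disjoint_family_def by blast

lemma ideal_mono: "C \<subseteq> B \<Longrightarrow> ideal_gen C \<subseteq> ideal_gen B"
  unfolding ideal_gen_def by blast

lemma st_mad:
  assumes ad: "almost_disjoint_family B" and st: "strongly_tight B"
  shows "MAD_family B"
  unfolding MAD_family_def
proof (intro conjI ad allI impI)
  fix B' assume B': "almost_disjoint_family B' \<and> B \<subseteq> B'"
  show "B' = B"
  proof (rule ccontr)
    assume "B' \<noteq> B"
    then have "\<not> B' \<subseteq> B" using B' subset_antisym by metis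
    then obtain Z where Z: "Z \<in> B'" "Z \<notin> B" by (auto simp: subset_iff)
    have Zinf: "infinite Z" using Z B' unfolding almost_disjoint_family_def by blast
    have Zb: "finite (Z \<inter> b)" if "b \<in> B" for b
    proof -
      have "Z \<noteq> b" using Z(2) that by blast
      moreover have "b \<in> B'" using B' that by blast
      ultimately show ?thesis using Z(1) B' unfolding almost_disjoint_family_def by blast
    qed
    have ZY: "finite (Z \<inter> Y)" if "Y \<in> ideal_gen B" for Y
    proof -
      have "\<exists>F. F \<subseteq> B \<and> finite F \<and> finite (Y - \<Union>F)" using that unfolding ideal_gen_def by simp
      then obtain F where F: "F \<subseteq> B" "finite F" "finite (Y - \<Union>F)" by auto
      have "Z \<inter> Y \<subseteq> (Y - \<Union>F) \<union> (\<Union>b\<in>F. Z \<inter> b)" by blast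
      moreover have "finite (\<Union>b\<in>F. Z \<inter> b)" using F(1,2) Zb by (intro finite_UN_I) auto
      ultimately show ?thesis using F(3) by (meson finite_UnI finite_subset)
    qed
    define X where "X n = Z - {..<n}" for n
    have Xinf: "\<forall>n. infinite (X n)" unfolding X_def using Zinf by (intro allI Diff_infinite_finite) simp_all
    have "\<forall>Y\<in>ideal_gen B. finite {n. almost_subset (X n) Y}"
    proof
      fix Y assume Y: "Y \<in> ideal_gen B"
      have "{n. almost_subset (X n) Y} = {}"
      proof (rule ccontr)
        assume "{n. almost_subset (X n) Y} \<noteq> {}"
        then obtain n where "finite (X n - Y)" unfolding almost_subset_def by blast
        moreover have "X n \<subseteq> (X n - Y) \<union> (Z \<inter> Y)" unfolding X_def by blast
        ultimately have "finite (X n)" using ZY[OF Y] by (meson finite_UnI finite_subset)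
        then show False using Xinf by blast
      qed
      then show "finite {n. almost_subset (X n) Y}" by simp
    qed
    then have key: "(\<forall>n. infinite (X n)) \<and> (\<forall>Y\<in>ideal_gen B. finite {n. almost_subset (X n) Y})"
      using Xinf by blast
    have "\<exists>A\<in>ideal_gen B. \<forall>n. A \<inter> X n \<noteq> {}"
      by (rule st[unfolded strongly_tight_def strongly_tight_ideal_def, rule_format, OF key])
    then obtain A where A: "A \<in> ideal_gen B" "\<forall>n. A \<inter> X n \<noteq> {}" by blast
    have "infinite (Z \<inter> A)"
      unfolding infinite_nat_iff_unbounded_le
    proof
      fix m
      obtain x where "x \<in> A \<inter> X m" using A(2) by blast
      then have "x \<in> Z \<inter> A" "m \<le> x" unfolding X_def by auto
      then show "\<exists>n\<ge>m. n \<in> Z \<inter> A" by blast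
    qed
    then show False using ZY[OF A(1)] by blast
  qed
qed

theorem mainTheorem10:
  assumes "p_eq_c"
    and "almost_disjoint_family \<A>"
    and "(card_of \<A>, card_of (UNIV :: nat set set)) \<in> ordLess"
  shows "\<exists>\<B>. \<A> \<subseteq> \<B> \<and> MAD_family \<B> \<and> strongly_tight \<B>"
proof -
  note pc = assms(1) and adA = assms(2)
  have cA: "|\<A>| <o cc" using assms(3) by simp
  have wo: "wo_rel cc" by (rule Card_order_wo_rel[OF card_of_Card_order])
  define dec where "dec \<alpha> = (\<lambda>n. {k. prod_encode (n,k) \<in> \<alpha>})" for \<alpha> :: "nat set"
  define enc where "enc X = {prod_encode (n,k) | n k. k \<in> X n}" for X :: "nat \<Rightarrow> nat set"
  have dec_enc: "dec (enc X) = X" for X unfolding dec_def enc_def by auto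
  define goodA where "goodA C X A' \<longleftrightarrow> infinite A' \<and> (\<forall>Z\<in>C. finite (A' \<inter> Z)) \<and> (\<forall>n. A' \<inter> X n \<noteq> {})"
    for C :: "nat set set" and X :: "nat \<Rightarrow> nat set" and A'
  define step where "step C X = (if \<exists>A'. goodA C X A' then SOME A'. goodA C X A' else {})" for C X
  define H where "H f \<alpha> = step (\<A> \<union> (f ` underS cc \<alpha> - {{}})) (dec \<alpha>)" for f :: "nat set \<Rightarrow> nat set" and \<alpha>
  define F where "F = wo_rel.worec cc H"
  have adm: "wo_rel.adm_wo cc H"
    unfolding wo_rel.adm_wo_def[OF wo]
  proof (intro allI impI)
    fix f g :: "nat set \<Rightarrow> nat set" and x
    assume "\<forall>y\<in>underS cc x. f y = g y"
    then have "f ` underS cc x = g ` underS cc x" by (intro image_cong) auto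
    then show "H f x = H g x" unfolding H_def by simp
  qed
  have Ffix: "F = H F" unfolding F_def by (rule wo_rel.worec_fixpoint[OF wo adm])
  define Cs where "Cs \<alpha> = \<A> \<union> (F ` underS cc \<alpha> - {{}})" for \<alpha>
  have Fstep: "F \<alpha> = step (Cs \<alpha>) (dec \<alpha>)" for \<alpha>
    unfolding Cs_def by (subst Ffix) (simp add: H_def)
  have F2: "goodA (Cs \<alpha>) (dec \<alpha>) (F \<alpha>)" if ex: "\<exists>A'. goodA (Cs \<alpha>) (dec \<alpha>) A'" for \<alpha>
  proof -
    have "F \<alpha> = (SOME A'. goodA (Cs \<alpha>) (dec \<alpha>) A')" using ex unfolding Fstep step_def by simp
    then show ?thesis using someI_ex[OF ex] by simp
  qed
  have F1: "F \<alpha> = {} \<or> goodA (Cs \<alpha>) (dec \<alpha>) (F \<alpha>)" for \<alpha>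
  proof (cases "\<exists>A'. goodA (Cs \<alpha>) (dec \<alpha>) A'")
    case True then show ?thesis using F2 by blast
  next
    case False
    have "step (Cs \<alpha>) (dec \<alpha>) = {}" unfolding step_def by (rule if_not_P[OF False])
    then show ?thesis unfolding Fstep by simp
  qed
  define B where "B = \<A> \<union> (range F - {{}})"
  have AinfA: "\<forall>X\<in>\<A>. infinite X" and adA': "\<And>X Y. X \<in> \<A> \<Longrightarrow> Y \<in> \<A> \<Longrightarrow> X \<noteq> Y \<Longrightarrow> finite (X \<inter> Y)"
    using adA unfolding almost_disjoint_family_def by auto
  have Fgood: "infinite (F \<alpha>) \<and> (\<forall>Z\<in>Cs \<alpha>. finite (F \<alpha> \<inter> Z))" if "F \<alpha> \<noteq> {}" for \<alpha>
    using F1[of \<alpha>] that unfolding goodA_def by auto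
  have FF: "finite (F \<alpha> \<inter> F \<beta>)" if "F \<alpha> \<noteq> {}" "F \<beta> \<noteq> {}" "F \<alpha> \<noteq> F \<beta>" for \<alpha> \<beta>
  proof -
    have "\<alpha> \<noteq> \<beta>" using that by auto
    have "(\<alpha>,\<beta>) \<in> cc \<or> (\<beta>,\<alpha>) \<in> cc" using wo_rel.TOTALS[OF wo] by (simp add: Field_card_of)
    then show ?thesis
    proof
      assume "(\<alpha>,\<beta>) \<in> cc"
      then have "\<alpha> \<in> underS cc \<beta>" using \<open>\<alpha> \<noteq> \<beta>\<close> unfolding underS_def by simp
      then have "F \<alpha> \<in> Cs \<beta>" using that unfolding Cs_def by blast
      then show ?thesis using Fgood[OF that(2)] by (simp add: Int_commute)
    next
      assume "(\<beta>,\<alpha>) \<in> cc"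
      then have "\<beta> \<in> underS cc \<alpha>" using \<open>\<alpha> \<noteq> \<beta>\<close> unfolding underS_def by simp
      then have "F \<beta> \<in> Cs \<alpha>" using that unfolding Cs_def by blast
      then show ?thesis using Fgood[OF that(1)] by simp
    qed
  qed
  have FA: "finite (F \<alpha> \<inter> X)" if "F \<alpha> \<noteq> {}" "X \<in> \<A>" for \<alpha> X
    using Fgood[OF that(1)] that(2) unfolding Cs_def by blast
  have adB: "almost_disjoint_family B"
    unfolding almost_disjoint_family_def
  proof (intro conjI ballI impI)
    fix X assume "X \<in> B" then show "infinite X" using AinfA Fgood unfolding B_def by auto
  next
    fix X Y assume XY: "X \<in> B" "Y \<in> B" "X \<noteq> Y"
    show "finite (X \<inter> Y)"
    proof (cases "X \<in> \<A>")
      case XA: True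
      show ?thesis
      proof (cases "Y \<in> \<A>")
        case True then show ?thesis using adA' XA XY by blast
      next
        case False
        then obtain \<beta> where "Y = F \<beta>" "F \<beta> \<noteq> {}" using XY unfolding B_def by blast
        then show ?thesis using FA[of \<beta> X] XA by (simp add: Int_commute)
      qed
    next
      case XnA: False
      then obtain \<alpha> where a: "X = F \<alpha>" "F \<alpha> \<noteq> {}" using XY unfolding B_def by blast
      show ?thesis
      proof (cases "Y \<in> \<A>")
        case True then show ?thesis using FA a by blast
      next
        case False
        then obtain \<beta> where "Y = F \<beta>" "F \<beta> \<noteq> {}" using XY unfolding B_def by blast
        then show ?thesis using FF a XY by blast
      qed
    qed
  qed
  have CsB: "Cs \<alpha> \<subseteq> B" for \<alpha> unfolding Cs_def B_def by blast
  have cCs: "|Cs \<alpha>| <o cc" for \<alpha>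
  proof -
    have "|F ` underS cc \<alpha> - {{}}| \<le>o |F ` underS cc \<alpha>|" by (rule card_of_mono1) blast
    moreover have "|F ` underS cc \<alpha>| \<le>o |underS cc \<alpha>|" by (rule card_of_image)
    moreover have "|underS cc \<alpha>| <o cc" by (rule card_of_underS[OF card_of_Card_order]) (simp add: Field_card_of)
    ultimately have "|F ` underS cc \<alpha> - {{}}| <o cc" by (meson ordLeq_ordLess_trans ordLeq_transitive)
    have inf: "infinite (UNIV :: nat set set)" by (metis finite_Pow_iff Pow_UNIV infinite_UNIV_nat)
    show ?thesis unfolding Cs_def by (rule card_of_Un_ordLess_infinite[OF inf cA]) fact
  qed
  have stB: "strongly_tight B"
    unfolding strongly_tight_def strongly_tight_ideal_def
  proof (intro allI impI)
    fix X :: "nat \<Rightarrow> nat set"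
    assume X: "(\<forall>n. infinite (X n)) \<and> (\<forall>Y\<in>ideal_gen B. finite {n. almost_subset (X n) Y})"
    define \<alpha> where "\<alpha> = enc X"
    have d: "dec \<alpha> = X" unfolding \<alpha>_def by (rule dec_enc)
    have hyp: "\<forall>Y\<in>ideal_gen (Cs \<alpha>). finite {n. almost_subset (X n) Y}"
      using X ideal_mono[OF CsB[of \<alpha>]] by blast
    have "\<exists>A'. goodA (Cs \<alpha>) (dec \<alpha>) A'"
      using extend_one[OF pc ad_mono[OF adB CsB] cCs, of X] X hyp d unfolding goodA_def by blast
    then have g: "goodA (Cs \<alpha>) X (F \<alpha>)" using F2 d by metis
    then have "F \<alpha> \<in> B" unfolding goodA_def B_def by auto
    then have "F \<alpha> \<in> ideal_gen B" unfolding ideal_gen_def by (intro CollectI exI[of _ "{F \<alpha>}"]) auto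
    then show "\<exists>A\<in>ideal_gen B. \<forall>n. A \<inter> X n \<noteq> {}" using g unfolding goodA_def by blast
  qed
  have "\<A> \<subseteq> B" unfolding B_def by blast
  then show ?thesis using st_mad[OF adB stB] stB by blast
qed

end
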